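(* Let $\phi$ be the real root of $x^3=x^2+x+1$. For each integer $n\ge 4$, there exists an integer sequence $\langle a_i\rangle_{i=1}^n$ with $a_i=a_{i-1}+a_{i-2}+a_{i-3}$ for $4\le i\le n$, $a_n=0$, $a_1>0$, $a_2\le 0$, $a_3<0$ and $a_1<0.81\phi^{n/2}$. Similarly, for each integer $n\ge 4$ there exists an integer sequence $\langle b_i\rangle_{i=1}^n$ with $b_i=b_{i-1}+b_{i-2}+b_{i-3}$ for $4\le i\le n$, $b_n=0$, $b_2>0$, $b_1\le 0$, $b_3<0$ and $b_2<0.64\phi^{n/2}$. *)

theory Defs
  imports Complex_Main
begin

end

theory Submission
  imports Defs
begin

lemma phi_gt1:
  fixes \<phi> :: real assumes c: "\<phi>^3 = \<phi>^2 + \<phi> + 1" shows "1 < \<phi>"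
proof (rule ccontr)
  assume "\<not> 1 < \<phi>" hence h: "\<phi> \<le> 1" by simp
  have pos: "\<phi>^2 + \<phi> + 1 > 0"
  proof -
    have "(\<phi> + 1/2)^2 \<ge> 0" by simp
    moreover have "\<phi>^2 + \<phi> + 1 = (\<phi> + 1/2)^2 + 3/4" by (simp add: power2_eq_square algebra_simps)
    ultimately show ?thesis by linarith
  qed
  have "\<phi> > 0"
  proof (rule ccontr)
    assume "\<not> \<phi> > 0" hence "\<phi> \<le> 0" by simp
    hence "\<phi>^3 \<le> 0" by (simp add: power3_eq_cube mult_nonpos_nonneg mult_nonneg_nonpos zero_le_mult_iff)
    thus False using c pos by simp
  qed
  hence "\<phi>^3 \<le> 1" using h by (simp add: power_le_one)
  moreover have "\<phi>^2 + \<phi> + 1 > 1" using \<open>\<phi> > 0\<close> by (simp add: add_pos_nonneg)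
  ultimately show False using c by simp
qed

lemma cubic_diff: fixes \<phi> x :: real shows "x^3 - x^2 - x - 1 - (\<phi>^3 - \<phi>^2 - \<phi> - 1)
      = (x - \<phi>) * (x*(x-1) + \<phi>*(\<phi>-1) + x*\<phi> - 1)"
  by (simp add: algebra_simps power2_eq_square power3_eq_cube)

lemma cubic_pos: fixes \<phi> x :: real assumes "1 < x" "1 < \<phi>"
  shows "x*(x-1) + \<phi>*(\<phi>-1) + x*\<phi> - 1 > 0"
proof -
  have "x*(x-1) \<ge> 0" using assms by simp
  moreover have "\<phi>*(\<phi>-1) \<ge> 0" using assms by simp
  moreover have "1*1 < x*\<phi>" using mult_strict_mono[of 1 x 1 \<phi>] assms by simp
  ultimately show ?thesis by linarith
qed

lemma phi_bounds:
  fixes \<phi> :: real assumes c: "\<phi>^3 = \<phi>^2 + \<phi> + 1"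
  shows "(18392867/10000000) \<le> \<phi> \<and> \<phi> \<le> (4598217/2500000)"
proof -
  have g: "1 < \<phi>" using phi_gt1[OF c] .
  have c0: "\<phi>^3 - \<phi>^2 - \<phi> - 1 = 0" using c by simp
  have l: "(18392867/10000000) \<le> \<phi>"
  proof (rule ccontr)
    assume "\<not> (18392867/10000000) \<le> \<phi>"
    hence a: "((18392867/10000000) - \<phi>) > 0" by simp
    have b: "(18392867/10000000)*((18392867/10000000)-1) + \<phi>*(\<phi>-1) + (18392867/10000000)*\<phi> - 1 > (0::real)"
      by (rule cubic_pos) (use g in auto)
    have "((18392867/10000000) - \<phi>) * ((18392867/10000000)*((18392867/10000000)-1) + \<phi>*(\<phi>-1) + (18392867/10000000)*\<phi> - 1) > 0"
      using a b by (rule mult_pos_pos)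
    moreover have "((18392867/10000000)::real)^3 - (18392867/10000000)^2 - (18392867/10000000) - 1 < 0"
      by (simp add: power3_eq_cube power2_eq_square)
    ultimately show False using cubic_diff[of "(18392867/10000000)" \<phi>] c0 by linarith
  qed
  have h: "\<phi> \<le> (4598217/2500000)"
  proof (rule ccontr)
    assume "\<not> \<phi> \<le> (4598217/2500000)"
    hence a: "((4598217/2500000) - \<phi>) < 0" by simp
    have b: "(4598217/2500000)*((4598217/2500000)-1) + \<phi>*(\<phi>-1) + (4598217/2500000)*\<phi> - 1 > (0::real)"
      by (rule cubic_pos) (use g in auto)
    have "((4598217/2500000) - \<phi>) * ((4598217/2500000)*((4598217/2500000)-1) + \<phi>*(\<phi>-1) + (4598217/2500000)*\<phi> - 1) < 0"
      using a b by (rule mult_neg_pos)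
    moreover have "((4598217/2500000)::real)^3 - (4598217/2500000)^2 - (4598217/2500000) - 1 > 0"
      by (simp add: power3_eq_cube power2_eq_square)
    ultimately show False using cubic_diff[of "(4598217/2500000)" \<phi>] c0 by linarith
  qed
  show ?thesis using l h by simp
qed

fun U :: "int \<Rightarrow> int \<Rightarrow> nat \<Rightarrow> int" where
  "U p q 0 = 0"
| "U p q (Suc 0) = q"
| "U p q (Suc (Suc 0)) = p"
| "U p q (Suc (Suc (Suc k))) = U p q k - U p q (Suc k) - U p q (Suc (Suc k))"

lemma U_lin: "U p q k = (p+q) * U 1 0 k + q * U 1 0 (Suc k)"
proof (induction p q k rule: U.induct)
  case (4 p q k)
  then show ?case by (simp add: algebra_simps)
qed (simp_all add: numeral_eq_Suc)

definition ee :: "real \<Rightarrow> int \<Rightarrow> int \<Rightarrow> nat \<Rightarrow> real" where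
  "ee \<phi> p q k = \<phi> * of_int (U p q (Suc k)) - of_int (U p q k)"

definition Qf :: "real \<Rightarrow> real \<Rightarrow> real \<Rightarrow> real" where
  "Qf \<phi> s t = t^2 + (\<phi>^2-\<phi>)*s*t + \<phi>*s^2"

definition FF :: "real \<Rightarrow> int \<Rightarrow> int \<Rightarrow> nat \<Rightarrow> real" where
  "FF \<phi> p q k = of_int (U p q k) + (\<phi>-1) * of_int (U p q (Suc k)) + (\<phi>^2-\<phi>-1) * of_int (U p q (Suc (Suc k)))"

lemma ee_rec:
  assumes c: "\<phi>^3 = \<phi>^2 + \<phi> + 1"
  shows "ee \<phi> p q (Suc (Suc k)) = -(\<phi>^2-\<phi>) * ee \<phi> p q (Suc k) - \<phi> * ee \<phi> p q k"
proof -
  have "ee \<phi> p q (Suc (Suc k)) - (-(\<phi>^2-\<phi>) * ee \<phi> p q (Suc k) - \<phi> * ee \<phi> p q k)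
     = (\<phi>^3-\<phi>^2-\<phi>-1) * of_int (U p q (Suc (Suc k)))"
    unfolding ee_def by (simp add: algebra_simps power2_eq_square power3_eq_cube)
  thus ?thesis using c by simp
qed

lemma Qf_step_gen: "Qf \<phi> t (-(\<phi>^2-\<phi>)*t - \<phi>*s) = \<phi> * Qf \<phi> s t"
  unfolding Qf_def by (simp add: algebra_simps power2_eq_square)

lemma Qf_pow:
  assumes c: "\<phi>^3 = \<phi>^2 + \<phi> + 1"
  shows "Qf \<phi> (ee \<phi> p q k) (ee \<phi> p q (Suc k)) = \<phi>^k * Qf \<phi> (\<phi>*of_int q) (\<phi>*of_int p - of_int q)"
proof (induction k)
  case 0
  then show ?case by (simp add: ee_def)
next
  case (Suc k)
  have "Qf \<phi> (ee \<phi> p q (Suc k)) (ee \<phi> p q (Suc (Suc k))) = \<phi> * Qf \<phi> (ee \<phi> p q k) (ee \<phi> p q (Suc k))"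
    using ee_rec[OF c] Qf_step_gen by simp
  then show ?case using Suc by simp
qed

lemma FF_step:
  assumes c: "\<phi>^3 = \<phi>^2 + \<phi> + 1"
  shows "\<phi> * FF \<phi> p q (Suc k) = FF \<phi> p q k"
proof -
  have "\<phi> * FF \<phi> p q (Suc k) - FF \<phi> p q k
     = (\<phi>^3-\<phi>^2-\<phi>-1) * of_int (U p q k - U p q (Suc k) - U p q (Suc (Suc k)))"
    unfolding FF_def by (simp add: algebra_simps power2_eq_square power3_eq_cube)
  thus ?thesis using c by simp
qed

lemma FF_pow:
  assumes c: "\<phi>^3 = \<phi>^2 + \<phi> + 1"
  shows "\<phi>^k * FF \<phi> p q k = (\<phi>-1)*of_int q + (\<phi>^2-\<phi>-1)*of_int p"
proof (induction k)
  case 0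
  then show ?case by (simp add: FF_def)
next
  case (Suc k)
  have "\<phi>^Suc k * FF \<phi> p q (Suc k) = \<phi>^k * (\<phi> * FF \<phi> p q (Suc k))" by (simp add: algebra_simps)
  also have "\<dots> = \<phi>^k * FF \<phi> p q k" using FF_step[OF c, of p q k] by simp
  finally show ?case using Suc by simp
qed

lemma D_ids:
  fixes p q :: int and k :: nat
  assumes c: "\<phi>^3 = \<phi>^2 + \<phi> + 1"
  defines "X \<equiv> ee \<phi> p q k" and "Y \<equiv> ee \<phi> p q (Suc k)" and "F \<equiv> FF \<phi> p q k"
  shows "(3*\<phi>^2-2*\<phi>-1) * of_int (U p q (Suc (Suc k))) = X + (2*\<phi>-1)*Y + F"
    and "(3*\<phi>^2-2*\<phi>-1) * of_int (U p q (Suc k)) = \<phi>*X - (\<phi>^2-\<phi>-1)*Y + \<phi>*F"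
    and "(3*\<phi>^2-2*\<phi>-1) * of_int (U p q k) = (-2*\<phi>^2+2*\<phi>+1)*X - Y + \<phi>^2*F"
proof -
  show "(3*\<phi>^2-2*\<phi>-1) * of_int (U p q (Suc (Suc k))) = X + (2*\<phi>-1)*Y + F"
    unfolding X_def Y_def F_def ee_def FF_def by (simp add: algebra_simps power2_eq_square)
  show "(3*\<phi>^2-2*\<phi>-1) * of_int (U p q (Suc k)) = \<phi>*X - (\<phi>^2-\<phi>-1)*Y + \<phi>*F"
    unfolding X_def Y_def F_def ee_def FF_def by (simp add: algebra_simps power2_eq_square)
  have "(-2*\<phi>^2+2*\<phi>+1)*X - Y + \<phi>^2*F - (3*\<phi>^2-2*\<phi>-1) * of_int (U p q k)
      = (\<phi>^3-\<phi>^2-\<phi>-1) * (\<phi> * of_int (U p q (Suc (Suc k))) - of_int (U p q (Suc k)))"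
    unfolding X_def Y_def F_def ee_def FF_def by (simp add: algebra_simps power2_eq_square power3_eq_cube)
  thus "(3*\<phi>^2-2*\<phi>-1) * of_int (U p q k) = (-2*\<phi>^2+2*\<phi>+1)*X - Y + \<phi>^2*F" using c by simp
qed

lemma powr_bound:
  fixes \<phi> a c :: real
  assumes "\<phi> > 0" "c > 0" "a^2 < c^2 * \<phi>^n"
  shows "a < c * \<phi> powr (real n / 2)"
proof -
  have "(c * \<phi> powr (real n / 2))^2 = c^2 * (\<phi> powr (real n / 2))^2" by (simp add: power_mult_distrib)
  also have "(\<phi> powr (real n / 2))^2 = \<phi> powr (real n)"
    using powr_power[of \<phi> "real n / 2" 2] assms(1) by simp
  also have "\<phi> powr (real n) = \<phi>^n" using powr_realpow assms(1) by simp
  finally have "a^2 < (c * \<phi> powr (real n / 2))^2" using assms(3) by simp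
  moreover have "0 \<le> c * \<phi> powr (real n / 2)" using assms by simp
  ultimately show ?thesis using power_less_imp_less_base by blast
qed

lemma phi2_bounds:
  fixes \<phi> :: real assumes "(18392867/10000000) \<le> \<phi>" "\<phi> \<le> (4598217/2500000)"
  shows "(6765951/2000000) \<le> \<phi>^2 \<and> \<phi>^2 \<le> (52859/15625)"
proof -
  have "(18392867/10000000) * (18392867/10000000) \<le> \<phi> * \<phi>" using assms by (intro mult_mono) auto
  moreover have "\<phi> * \<phi> \<le> (4598217/2500000) * (4598217/2500000)" using assms by (intro mult_mono) auto
  ultimately show ?thesis by (simp add: power2_eq_square)
qed

lemma red_4: fixes \<phi> :: real assumes c: "\<phi>^3 = \<phi>^2 + \<phi> + 1"
  shows "\<phi>^4 = 2*\<phi>^2 + 2*\<phi> + 1"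
proof -
  have "\<phi>^4 = \<phi> * \<phi>^3" by (simp add: power_Suc[symmetric] del: power_Suc)
  thus ?thesis using c by (simp add: algebra_simps power2_eq_square power3_eq_cube)
qed

lemma red_5: fixes \<phi> :: real assumes c: "\<phi>^3 = \<phi>^2 + \<phi> + 1"
  shows "\<phi>^5 = 4*\<phi>^2 + 3*\<phi> + 2"
proof -
  have "\<phi>^5 = \<phi> * \<phi>^4" by (simp add: power_Suc[symmetric] del: power_Suc)
  thus ?thesis using c red_4[OF c] by (simp add: algebra_simps power2_eq_square power3_eq_cube)
qed

lemma red_6: fixes \<phi> :: real assumes c: "\<phi>^3 = \<phi>^2 + \<phi> + 1"
  shows "\<phi>^6 = 7*\<phi>^2 + 6*\<phi> + 4"
proof -
  have "\<phi>^6 = \<phi> * \<phi>^5" by (simp add: power_Suc[symmetric] del: power_Suc)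
  thus ?thesis using c red_5[OF c] by (simp add: algebra_simps power2_eq_square power3_eq_cube)
qed

lemma sos_id: fixes \<phi> s t :: real assumes c: "\<phi>^3 = \<phi>^2 + \<phi> + 1"
  shows "4*\<phi>*Qf \<phi> s t = (2*\<phi>*s + (\<phi>^2-\<phi>)*t)^2 + \<phi>*(3+\<phi>^2-2*\<phi>)*t^2"
    and "4*Qf \<phi> s t = (2*t + (\<phi>^2-\<phi>)*s)^2 + \<phi>*(3+\<phi>^2-2*\<phi>)*s^2"
proof -
  have e: "(\<phi>^2-\<phi>)^2 = 4*\<phi> - \<phi>*(3+\<phi>^2-2*\<phi>)"
  proof -
    have "(\<phi>^2-\<phi>)^2 - (4*\<phi> - \<phi>*(3+\<phi>^2-2*\<phi>)) = \<phi> * (\<phi>^3 - \<phi>^2 - \<phi> - 1)"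
      by (simp add: algebra_simps power2_eq_square power3_eq_cube)
    thus ?thesis using c by simp
  qed
  show "4*\<phi>*Qf \<phi> s t = (2*\<phi>*s + (\<phi>^2-\<phi>)*t)^2 + \<phi>*(3+\<phi>^2-2*\<phi>)*t^2"
  proof -
    have "(2*\<phi>*s + (\<phi>^2-\<phi>)*t)^2 = 4*\<phi>^2*s^2 + 4*\<phi>*s*(\<phi>^2-\<phi>)*t + (\<phi>^2-\<phi>)^2*t^2"
      by (simp add: algebra_simps power2_eq_square)
    thus ?thesis unfolding Qf_def e by (simp add: algebra_simps power2_eq_square)
  qed
  show "4*Qf \<phi> s t = (2*t + (\<phi>^2-\<phi>)*s)^2 + \<phi>*(3+\<phi>^2-2*\<phi>)*s^2"
  proof -
    have "(2*t + (\<phi>^2-\<phi>)*s)^2 = 4*t^2 + 4*t*(\<phi>^2-\<phi>)*s + (\<phi>^2-\<phi>)^2*s^2"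
      by (simp add: algebra_simps power2_eq_square)
    thus ?thesis unfolding Qf_def e by (simp add: algebra_simps power2_eq_square)
  qed
qed

lemma ubA:
  fixes \<phi> a1 a2 a3 Q0 :: real and m :: nat
  assumes c: "\<phi>^3 = \<phi>^2 + \<phi> + 1" and lo: "(18392867/10000000) \<le> \<phi>" and hi: "\<phi> \<le> (4598217/2500000)"
    and s1: "a1 > 0" and s2: "a2 \<le> 0"
    and inv: "Qf \<phi> (\<phi>*a2 - a3) (\<phi>*a1 - a2) = \<phi>^m * Q0" and q0: "Q0 \<le> (93097/10000)"
  shows "a1 < 0.81 * \<phi> powr (real (m+3) / 2)"
proof -
  define t where "t = \<phi>*a1 - a2"
  define P where "P = 3+\<phi>^2-2*\<phi>"
  have p2: "(6765951/2000000) \<le> \<phi>^2 \<and> \<phi>^2 \<le> (52859/15625)" using phi2_bounds lo hi by blast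
  have Pb: "P \<ge> (6761/2500)" unfolding P_def using conjunct1[OF p2] conjunct2[OF p2] hi by linarith
  have phipos: "\<phi> > 0" using lo by simp
  have "4*\<phi>*Qf \<phi> (\<phi>*a2 - a3) t \<ge> \<phi>*P*t^2"
    using sos_id(1)[OF c, of "\<phi>*a2 - a3" t] unfolding P_def by simp
  hence "4*Qf \<phi> (\<phi>*a2 - a3) t \<ge> P*t^2" using phipos
    by (simp add: mult.assoc mult_le_cancel_left_pos)
  moreover have "t \<ge> \<phi>*a1" unfolding t_def using s2 by simp
  hence "t^2 \<ge> (\<phi>*a1)^2" using s1 phipos by (intro power_mono) auto
  hence "P*t^2 \<ge> P*(\<phi>*a1)^2" using Pb by (intro mult_left_mono) auto
  ultimately have A: "P*\<phi>^2*a1^2 \<le> 4*\<phi>^m*Q0" using inv unfolding t_def by (simp add: power_mult_distrib algebra_simps)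
  have B: "P*\<phi>^2*a1^2 \<le> \<phi>^m * (4*(93097/10000))"
  proof -
    have "4*\<phi>^m*Q0 = \<phi>^m * (4*Q0)" by simp
    also have "\<dots> \<le> \<phi>^m * (4*(93097/10000))" using q0 phipos by (intro mult_left_mono) auto
    finally show ?thesis using A by linarith
  qed
  have p5: "\<phi>^5 \<ge> (210497/10000)" using red_5[OF c] conjunct1[OF p2] lo by linarith
  have "P * \<phi>^5 \<ge> (6761/2500) * (210497/10000)" using Pb p5 by (intro mult_mono) auto
  hence K: "(6561/10000) * (P * \<phi>^5) > 4*(93097/10000)" by simp
  have "a1^2 < 0.81^2 * \<phi>^(m+3)"
  proof (rule ccontr)
    assume "\<not> a1^2 < 0.81^2 * \<phi>^(m+3)"
    hence "a1^2 \<ge> (6561/10000) * \<phi>^(m+3)" by (simp add: power2_eq_square)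
    hence "P*\<phi>^2*a1^2 \<ge> P*\<phi>^2*((6561/10000) * \<phi>^(m+3))" using Pb phipos by (intro mult_left_mono) auto
    also have "P*\<phi>^2*((6561/10000) * \<phi>^(m+3)) = \<phi>^m * ((6561/10000) * (P * \<phi>^5))"
      by (simp add: power_add algebra_simps) 
    finally have "\<phi>^m * ((6561/10000) * (P * \<phi>^5)) \<le> \<phi>^m * (4*(93097/10000))" using B by (rule order_trans)
    hence "(6561/10000) * (P * \<phi>^5) \<le> 4*(93097/10000)" using phipos by (simp add: mult_le_cancel_left_pos)
    thus False using K by simp
  qed
  thus ?thesis using powr_bound[of \<phi> "0.81" a1 "m+3"] phipos by simp
qed

lemma ubB:
  fixes \<phi> a1 a2 a3 Q0 :: real and m :: nat
  assumes c: "\<phi>^3 = \<phi>^2 + \<phi> + 1" and lo: "(18392867/10000000) \<le> \<phi>" and hi: "\<phi> \<le> (4598217/2500000)"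
    and s1: "a2 > 0" and s3: "a3 \<le> 0"
    and inv: "Qf \<phi> (\<phi>*a2 - a3) (\<phi>*a1 - a2) = \<phi>^m * Q0" and q0: "Q0 \<le> (93097/10000)"
  shows "a2 < 0.64 * \<phi> powr (real (m+3) / 2)"
proof -
  define s where "s = \<phi>*a2 - a3"
  define P where "P = 3+\<phi>^2-2*\<phi>"
  have p2: "(6765951/2000000) \<le> \<phi>^2 \<and> \<phi>^2 \<le> (52859/15625)" using phi2_bounds lo hi by blast
  have Pb: "P \<ge> (6761/2500)" unfolding P_def using conjunct1[OF p2] conjunct2[OF p2] hi by linarith
  have phipos: "\<phi> > 0" using lo by simp
  have "4*Qf \<phi> s (\<phi>*a1 - a2) \<ge> \<phi>*P*s^2"
    using sos_id(2)[OF c, of s "\<phi>*a1 - a2"] unfolding P_def by simp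
  moreover have "s \<ge> \<phi>*a2" unfolding s_def using s3 by simp
  hence "s^2 \<ge> (\<phi>*a2)^2" using s1 phipos by (intro power_mono) auto
  hence "\<phi>*P*s^2 \<ge> \<phi>*P*(\<phi>*a2)^2" using Pb phipos by (intro mult_left_mono) auto
  ultimately have A: "P*\<phi>^3*a2^2 \<le> 4*\<phi>^m*Q0" using inv unfolding s_def
    by (simp add: power_mult_distrib algebra_simps power2_eq_square power3_eq_cube)
  have B: "P*\<phi>^3*a2^2 \<le> \<phi>^m * (4*(93097/10000))"
  proof -
    have "4*\<phi>^m*Q0 = \<phi>^m * (4*Q0)" by simp
    also have "\<dots> \<le> \<phi>^m * (4*(93097/10000))" using q0 phipos by (intro mult_left_mono) auto
    finally show ?thesis using A by linarith
  qed
  have p6: "\<phi>^6 \<ge> (77433/2000)" using red_6[OF c] conjunct1[OF p2] lo by linarith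
  have "P * \<phi>^6 \<ge> (6761/2500) * (77433/2000)" using Pb p6 by (intro mult_mono) auto
  hence K: "(256/625) * (P * \<phi>^6) > 4*(93097/10000)" by simp
  have "a2^2 < 0.64^2 * \<phi>^(m+3)"
  proof (rule ccontr)
    assume "\<not> a2^2 < 0.64^2 * \<phi>^(m+3)"
    hence "a2^2 \<ge> (256/625) * \<phi>^(m+3)" by (simp add: power2_eq_square)
    hence "P*\<phi>^3*a2^2 \<ge> P*\<phi>^3*((256/625) * \<phi>^(m+3))" using Pb phipos by (intro mult_left_mono) auto
    also have "P*\<phi>^3*((256/625) * \<phi>^(m+3)) = \<phi>^m * ((256/625) * (P * \<phi>^6))"
      by (simp add: power_add algebra_simps) 
    finally have "\<phi>^m * ((256/625) * (P * \<phi>^6)) \<le> \<phi>^m * (4*(93097/10000))" using B by (rule order_trans)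
    hence "(256/625) * (P * \<phi>^6) \<le> 4*(93097/10000)" using phipos by (simp add: mult_le_cancel_left_pos)
    thus False using K by simp
  qed
  thus ?thesis using powr_bound[of \<phi> "0.64" a2 "m+3"] phipos by simp
qed

definition GA :: "real \<Rightarrow> real \<Rightarrow> real \<Rightarrow> real \<Rightarrow> real \<Rightarrow> bool" where
  "GA p q za zb zc \<longleftrightarrow> 0 < q*za - q*zb + p*zc \<and> (p+q)*zb + q*zc \<le> 0 \<and> (p+q)*za + q*zb < 0"

definition GB :: "real \<Rightarrow> real \<Rightarrow> real \<Rightarrow> real \<Rightarrow> real \<Rightarrow> bool" where
  "GB p q za zb zc \<longleftrightarrow> 0 < (p+q)*zb + q*zc \<and> q*za - q*zb + p*zc \<le> 0 \<and> (p+q)*za + q*zb < 0"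

lemma coverA:
  fixes X Y F PX P2X PY P2Y PF P2F za zb zc f :: real
  assumes za: "za = -2*P2X + 2*PX + X - Y + P2F"
    and zb: "zb = PX - P2Y + PY + Y + PF"
    and zc: "zc = X + 2*PY - Y + F"
    and bPX1: "0 \<le> X \<Longrightarrow> (18392867/10000000)*X \<le> PX \<and> PX \<le> (18392868/10000000)*X"
    and bPX2: "X \<le> 0 \<Longrightarrow> (18392868/10000000)*X \<le> PX \<and> PX \<le> (18392867/10000000)*X"
    and bP2X1: "0 \<le> X \<Longrightarrow> (33829755/10000000)*X \<le> P2X \<and> P2X \<le> (3382976/1000000)*X"
    and bP2X2: "X \<le> 0 \<Longrightarrow> (3382976/1000000)*X \<le> P2X \<and> P2X \<le> (33829755/10000000)*X"
    and bPY1: "0 \<le> Y \<Longrightarrow> (18392867/10000000)*Y \<le> PY \<and> PY \<le> (18392868/10000000)*Y"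
    and bPY2: "Y \<le> 0 \<Longrightarrow> (18392868/10000000)*Y \<le> PY \<and> PY \<le> (18392867/10000000)*Y"
    and bP2Y1: "0 \<le> Y \<Longrightarrow> (33829755/10000000)*Y \<le> P2Y \<and> P2Y \<le> (3382976/1000000)*Y"
    and bP2Y2: "Y \<le> 0 \<Longrightarrow> (3382976/1000000)*Y \<le> P2Y \<and> P2Y \<le> (33829755/10000000)*Y"
    and fF: "-f \<le> F" "F \<le> f" "-2*f \<le> PF" "PF \<le> 2*f" "-4*f \<le> P2F" "P2F \<le> 4*f"
    and hS: "200*f \<le> \<bar>X\<bar> + \<bar>Y\<bar>" and hS0: "0 < \<bar>X\<bar> + \<bar>Y\<bar>"
  shows "GA (1) (-1) za zb zc \<or> GA (1) (0) za zb zc \<or> GA (1) (1) za zb zc \<or> GA (0) (1) za zb zc \<or> GA (-1) (1) za zb zc \<or> GA (-1) (0) za zb zc \<or> GA (-1) (-1) za zb zc \<or> GA (0) (-1) za zb zc \<or> (0 < zc \<and> za < 0 \<and> 0 < -za + zb + zc \<and> 0 \<le> zc) \<or> (0 < -zc \<and> -za < 0 \<and> 0 < za - zb - zc \<and> zc \<le> 0)"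
proof -
  have Q0: "0 \<le> X \<Longrightarrow> 0 \<le> Y \<Longrightarrow> ?thesis"
  proof -
    assume hX: "0 \<le> X" and hY: "0 \<le> Y"
    have S: "200*f \<le> X + Y" using hS hX hY by simp
    have S0: "0 < X + Y" using hS0 hX hY by simp
    have PXa: "(18392867/10000000)*X \<le> PX" and PXb: "PX \<le> (18392868/10000000)*X" using bPX1[OF hX] by auto
    have P2Xa: "(33829755/10000000)*X \<le> P2X" and P2Xb: "P2X \<le> (3382976/1000000)*X" using bP2X1[OF hX] by auto
    have PYa: "(18392867/10000000)*Y \<le> PY" and PYb: "PY \<le> (18392868/10000000)*Y" using bPY1[OF hY] by auto
    have P2Ya: "(33829755/10000000)*Y \<le> P2Y" and P2Yb: "P2Y \<le> (3382976/1000000)*Y" using bP2Y1[OF hY] by auto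
    note facts = za zb zc fF S S0 hX hY PXa PXb P2Xa P2Xb PYa PYb P2Ya P2Yb
    show ?thesis
    proof (cases "(4)*Y - (9)*X \<le> 0")
      case True
      have c0: "0 < (-1)*za - (-1)*zb + (1)*zc" using facts True by linarith
      have c1: "(0)*zb + (-1)*zc \<le> 0" using facts True by linarith
      have c2: "(0)*za + (-1)*zb < 0" using facts True by linarith
      have "GA (1) (-1) za zb zc" unfolding GA_def using c0 c1 c2 by simp
      thus ?thesis by blast
    next
      case False
      note facts = facts False
      show ?thesis
      proof (cases "(1)*Y - (7)*X \<le> 0")
        case True
        have c0: "0 < zc" using facts True by linarith
        have c1: "za < 0" using facts True by linarith
        have c2: "0 < -za + zb + zc" using facts True by linarith
        have c3: "0 \<le> zc" using facts True by linarith
        show ?thesis using c0 c1 c2 c3 by blast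
      next
        case False
        note facts = facts False
        have c0: "0 < (0)*za - (0)*zb + (1)*zc" using facts  by linarith
        have c1: "(1)*zb + (0)*zc \<le> 0" using facts  by linarith
        have c2: "(1)*za + (0)*zb < 0" using facts  by linarith
        have "GA (1) (0) za zb zc" unfolding GA_def using c0 c1 c2 by simp
        thus ?thesis by blast
      qed
    qed
  qed
  have Q1: "X \<le> 0 \<Longrightarrow> 0 \<le> Y \<Longrightarrow> ?thesis"
  proof -
    assume hX: "X \<le> 0" and hY: "0 \<le> Y"
    have S: "200*f \<le> -X + Y" using hS hX hY by simp
    have S0: "0 < -X + Y" using hS0 hX hY by simp
    have PXa: "(18392868/10000000)*X \<le> PX" and PXb: "PX \<le> (18392867/10000000)*X" using bPX2[OF hX] by auto
    have P2Xa: "(3382976/1000000)*X \<le> P2X" and P2Xb: "P2X \<le> (33829755/10000000)*X" using bP2X2[OF hX] by auto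
    have PYa: "(18392867/10000000)*Y \<le> PY" and PYb: "PY \<le> (18392868/10000000)*Y" using bPY1[OF hY] by auto
    have P2Ya: "(33829755/10000000)*Y \<le> P2Y" and P2Yb: "P2Y \<le> (3382976/1000000)*Y" using bP2Y1[OF hY] by auto
    note facts = za zb zc fF S S0 hX hY PXa PXb P2Xa P2Xb PYa PYb P2Ya P2Yb
    show ?thesis
    proof (cases "(-2)*Y - (5)*X \<le> 0")
      case True
      have c0: "0 < (0)*za - (0)*zb + (1)*zc" using facts True by linarith
      have c1: "(1)*zb + (0)*zc \<le> 0" using facts True by linarith
      have c2: "(1)*za + (0)*zb < 0" using facts True by linarith
      have "GA (1) (0) za zb zc" unfolding GA_def using c0 c1 c2 by simp
      thus ?thesis by blast
    next
      case False
      note facts = facts False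
      show ?thesis
      proof (cases "(-9)*Y - (10)*X \<le> 0")
        case True
        have c0: "0 < (1)*za - (1)*zb + (1)*zc" using facts True by linarith
        have c1: "(2)*zb + (1)*zc \<le> 0" using facts True by linarith
        have c2: "(2)*za + (1)*zb < 0" using facts True by linarith
        have "GA (1) (1) za zb zc" unfolding GA_def using c0 c1 c2 by simp
        thus ?thesis by blast
      next
        case False
        note facts = facts False
        show ?thesis
        proof (cases "(-7)*Y - (2)*X \<le> 0")
          case True
          have c0: "0 < (1)*za - (1)*zb + (0)*zc" using facts True by linarith
          have c1: "(1)*zb + (1)*zc \<le> 0" using facts True by linarith
          have c2: "(1)*za + (1)*zb < 0" using facts True by linarith
          have "GA (0) (1) za zb zc" unfolding GA_def using c0 c1 c2 by simp
          thus ?thesis by blast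
        next
          case False
          note facts = facts False
          have c0: "0 < (1)*za - (1)*zb + (-1)*zc" using facts  by linarith
          have c1: "(0)*zb + (1)*zc \<le> 0" using facts  by linarith
          have c2: "(0)*za + (1)*zb < 0" using facts  by linarith
          have "GA (-1) (1) za zb zc" unfolding GA_def using c0 c1 c2 by simp
          thus ?thesis by blast
        qed
      qed
    qed
  qed
  have Q2: "X \<le> 0 \<Longrightarrow> Y \<le> 0 \<Longrightarrow> ?thesis"
  proof -
    assume hX: "X \<le> 0" and hY: "Y \<le> 0"
    have S: "200*f \<le> -X - Y" using hS hX hY by simp
    have S0: "0 < -X - Y" using hS0 hX hY by simp
    have PXa: "(18392868/10000000)*X \<le> PX" and PXb: "PX \<le> (18392867/10000000)*X" using bPX2[OF hX] by auto
    have P2Xa: "(3382976/1000000)*X \<le> P2X" and P2Xb: "P2X \<le> (33829755/10000000)*X" using bP2X2[OF hX] by auto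
    have PYa: "(18392868/10000000)*Y \<le> PY" and PYb: "PY \<le> (18392867/10000000)*Y" using bPY2[OF hY] by auto
    have P2Ya: "(3382976/1000000)*Y \<le> P2Y" and P2Yb: "P2Y \<le> (33829755/10000000)*Y" using bP2Y2[OF hY] by auto
    note facts = za zb zc fF S S0 hX hY PXa PXb P2Xa P2Xb PYa PYb P2Ya P2Yb
    show ?thesis
    proof (cases "(-4)*Y - (-9)*X \<le> 0")
      case True
      have c0: "0 < (1)*za - (1)*zb + (-1)*zc" using facts True by linarith
      have c1: "(0)*zb + (1)*zc \<le> 0" using facts True by linarith
      have c2: "(0)*za + (1)*zb < 0" using facts True by linarith
      have "GA (-1) (1) za zb zc" unfolding GA_def using c0 c1 c2 by simp
      thus ?thesis by blast
    next
      case False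
      note facts = facts False
      show ?thesis
      proof (cases "(-1)*Y - (-7)*X \<le> 0")
        case True
        have c0: "0 < -zc" using facts True by linarith
        have c1: "-za < 0" using facts True by linarith
        have c2: "0 < za - zb - zc" using facts True by linarith
        have c3: "zc \<le> 0" using facts True by linarith
        show ?thesis using c0 c1 c2 c3 by blast
      next
        case False
        note facts = facts False
        have c0: "0 < (0)*za - (0)*zb + (-1)*zc" using facts  by linarith
        have c1: "(-1)*zb + (0)*zc \<le> 0" using facts  by linarith
        have c2: "(-1)*za + (0)*zb < 0" using facts  by linarith
        have "GA (-1) (0) za zb zc" unfolding GA_def using c0 c1 c2 by simp
        thus ?thesis by blast
      qed
    qed
  qed
  have Q3: "0 \<le> X \<Longrightarrow> Y \<le> 0 \<Longrightarrow> ?thesis"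
  proof -
    assume hX: "0 \<le> X" and hY: "Y \<le> 0"
    have S: "200*f \<le> X - Y" using hS hX hY by simp
    have S0: "0 < X - Y" using hS0 hX hY by simp
    have PXa: "(18392867/10000000)*X \<le> PX" and PXb: "PX \<le> (18392868/10000000)*X" using bPX1[OF hX] by auto
    have P2Xa: "(33829755/10000000)*X \<le> P2X" and P2Xb: "P2X \<le> (3382976/1000000)*X" using bP2X1[OF hX] by auto
    have PYa: "(18392868/10000000)*Y \<le> PY" and PYb: "PY \<le> (18392867/10000000)*Y" using bPY2[OF hY] by auto
    have P2Ya: "(3382976/1000000)*Y \<le> P2Y" and P2Yb: "P2Y \<le> (33829755/10000000)*Y" using bP2Y2[OF hY] by auto
    note facts = za zb zc fF S S0 hX hY PXa PXb P2Xa P2Xb PYa PYb P2Ya P2Yb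
    show ?thesis
    proof (cases "(2)*Y - (-5)*X \<le> 0")
      case True
      have c0: "0 < (0)*za - (0)*zb + (-1)*zc" using facts True by linarith
      have c1: "(-1)*zb + (0)*zc \<le> 0" using facts True by linarith
      have c2: "(-1)*za + (0)*zb < 0" using facts True by linarith
      have "GA (-1) (0) za zb zc" unfolding GA_def using c0 c1 c2 by simp
      thus ?thesis by blast
    next
      case False
      note facts = facts False
      show ?thesis
      proof (cases "(9)*Y - (-10)*X \<le> 0")
        case True
        have c0: "0 < (-1)*za - (-1)*zb + (-1)*zc" using facts True by linarith
        have c1: "(-2)*zb + (-1)*zc \<le> 0" using facts True by linarith
        have c2: "(-2)*za + (-1)*zb < 0" using facts True by linarith
        have "GA (-1) (-1) za zb zc" unfolding GA_def using c0 c1 c2 by simp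
        thus ?thesis by blast
      next
        case False
        note facts = facts False
        show ?thesis
        proof (cases "(7)*Y - (-2)*X \<le> 0")
          case True
          have c0: "0 < (-1)*za - (-1)*zb + (0)*zc" using facts True by linarith
          have c1: "(-1)*zb + (-1)*zc \<le> 0" using facts True by linarith
          have c2: "(-1)*za + (-1)*zb < 0" using facts True by linarith
          have "GA (0) (-1) za zb zc" unfolding GA_def using c0 c1 c2 by simp
          thus ?thesis by blast
        next
          case False
          note facts = facts False
          have c0: "0 < (-1)*za - (-1)*zb + (1)*zc" using facts  by linarith
          have c1: "(0)*zb + (-1)*zc \<le> 0" using facts  by linarith
          have c2: "(0)*za + (-1)*zb < 0" using facts  by linarith
          have "GA (1) (-1) za zb zc" unfolding GA_def using c0 c1 c2 by simp
          thus ?thesis by blast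
        qed
      qed
    qed
  qed
  have "0 \<le> X \<or> X \<le> 0" "0 \<le> Y \<or> Y \<le> 0" by linarith+
  thus ?thesis using Q0 Q1 Q2 Q3 by blast
qed

lemma coverB:
  fixes X Y F PX P2X PY P2Y PF P2F za zb zc f :: real
  assumes za: "za = -2*P2X + 2*PX + X - Y + P2F"
    and zb: "zb = PX - P2Y + PY + Y + PF"
    and zc: "zc = X + 2*PY - Y + F"
    and bPX1: "0 \<le> X \<Longrightarrow> (18392867/10000000)*X \<le> PX \<and> PX \<le> (18392868/10000000)*X"
    and bPX2: "X \<le> 0 \<Longrightarrow> (18392868/10000000)*X \<le> PX \<and> PX \<le> (18392867/10000000)*X"
    and bP2X1: "0 \<le> X \<Longrightarrow> (33829755/10000000)*X \<le> P2X \<and> P2X \<le> (3382976/1000000)*X"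
    and bP2X2: "X \<le> 0 \<Longrightarrow> (3382976/1000000)*X \<le> P2X \<and> P2X \<le> (33829755/10000000)*X"
    and bPY1: "0 \<le> Y \<Longrightarrow> (18392867/10000000)*Y \<le> PY \<and> PY \<le> (18392868/10000000)*Y"
    and bPY2: "Y \<le> 0 \<Longrightarrow> (18392868/10000000)*Y \<le> PY \<and> PY \<le> (18392867/10000000)*Y"
    and bP2Y1: "0 \<le> Y \<Longrightarrow> (33829755/10000000)*Y \<le> P2Y \<and> P2Y \<le> (3382976/1000000)*Y"
    and bP2Y2: "Y \<le> 0 \<Longrightarrow> (3382976/1000000)*Y \<le> P2Y \<and> P2Y \<le> (33829755/10000000)*Y"
    and fF: "-f \<le> F" "F \<le> f" "-2*f \<le> PF" "PF \<le> 2*f" "-4*f \<le> P2F" "P2F \<le> 4*f"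
    and hS: "200*f \<le> \<bar>X\<bar> + \<bar>Y\<bar>" and hS0: "0 < \<bar>X\<bar> + \<bar>Y\<bar>"
  shows "GB (0) (1) za zb zc \<or> GB (-1) (1) za zb zc \<or> GB (-1) (0) za zb zc \<or> GB (-1) (-1) za zb zc \<or> GB (0) (-1) za zb zc \<or> GB (1) (-1) za zb zc \<or> GB (1) (0) za zb zc \<or> GB (1) (1) za zb zc"
proof -
  have Q0: "0 \<le> X \<Longrightarrow> 0 \<le> Y \<Longrightarrow> ?thesis"
  proof -
    assume hX: "0 \<le> X" and hY: "0 \<le> Y"
    have S: "200*f \<le> X + Y" using hS hX hY by simp
    have S0: "0 < X + Y" using hS0 hX hY by simp
    have PXa: "(18392867/10000000)*X \<le> PX" and PXb: "PX \<le> (18392868/10000000)*X" using bPX1[OF hX] by auto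
    have P2Xa: "(33829755/10000000)*X \<le> P2X" and P2Xb: "P2X \<le> (3382976/1000000)*X" using bP2X1[OF hX] by auto
    have PYa: "(18392867/10000000)*Y \<le> PY" and PYb: "PY \<le> (18392868/10000000)*Y" using bPY1[OF hY] by auto
    have P2Ya: "(33829755/10000000)*Y \<le> P2Y" and P2Yb: "P2Y \<le> (3382976/1000000)*Y" using bP2Y1[OF hY] by auto
    note facts = za zb zc fF S S0 hX hY PXa PXb P2Xa P2Xb PYa PYb P2Ya P2Yb
    have c0: "0 < (1)*zb + (1)*zc" using facts  by linarith
    have c1: "(1)*za - (1)*zb + (0)*zc \<le> 0" using facts  by linarith
    have c2: "(1)*za + (1)*zb < 0" using facts  by linarith
    have "GB (0) (1) za zb zc" unfolding GB_def using c0 c1 c2 by simp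
    thus ?thesis by blast
  qed
  have Q1: "X \<le> 0 \<Longrightarrow> 0 \<le> Y \<Longrightarrow> ?thesis"
  proof -
    assume hX: "X \<le> 0" and hY: "0 \<le> Y"
    have S: "200*f \<le> -X + Y" using hS hX hY by simp
    have S0: "0 < -X + Y" using hS0 hX hY by simp
    have PXa: "(18392868/10000000)*X \<le> PX" and PXb: "PX \<le> (18392867/10000000)*X" using bPX2[OF hX] by auto
    have P2Xa: "(3382976/1000000)*X \<le> P2X" and P2Xb: "P2X \<le> (33829755/10000000)*X" using bP2X2[OF hX] by auto
    have PYa: "(18392867/10000000)*Y \<le> PY" and PYb: "PY \<le> (18392868/10000000)*Y" using bPY1[OF hY] by auto
    have P2Ya: "(33829755/10000000)*Y \<le> P2Y" and P2Yb: "P2Y \<le> (3382976/1000000)*Y" using bP2Y1[OF hY] by auto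
    note facts = za zb zc fF S S0 hX hY PXa PXb P2Xa P2Xb PYa PYb P2Ya P2Yb
    show ?thesis
    proof (cases "(-5)*Y - (9)*X \<le> 0")
      case True
      have c0: "0 < (0)*zb + (1)*zc" using facts True by linarith
      have c1: "(1)*za - (1)*zb + (-1)*zc \<le> 0" using facts True by linarith
      have c2: "(0)*za + (1)*zb < 0" using facts True by linarith
      have "GB (-1) (1) za zb zc" unfolding GB_def using c0 c1 c2 by simp
      thus ?thesis by blast
    next
      case False
      note facts = facts False
      show ?thesis
      proof (cases "(-9)*Y - (4)*X \<le> 0")
        case True
        have c0: "0 < (-1)*zb + (0)*zc" using facts True by linarith
        have c1: "(0)*za - (0)*zb + (-1)*zc \<le> 0" using facts True by linarith
        have c2: "(-1)*za + (0)*zb < 0" using facts True by linarith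
        have "GB (-1) (0) za zb zc" unfolding GB_def using c0 c1 c2 by simp
        thus ?thesis by blast
      next
        case False
        note facts = facts False
        have c0: "0 < (-2)*zb + (-1)*zc" using facts  by linarith
        have c1: "(-1)*za - (-1)*zb + (-1)*zc \<le> 0" using facts  by linarith
        have c2: "(-2)*za + (-1)*zb < 0" using facts  by linarith
        have "GB (-1) (-1) za zb zc" unfolding GB_def using c0 c1 c2 by simp
        thus ?thesis by blast
      qed
    qed
  qed
  have Q2: "X \<le> 0 \<Longrightarrow> Y \<le> 0 \<Longrightarrow> ?thesis"
  proof -
    assume hX: "X \<le> 0" and hY: "Y \<le> 0"
    have S: "200*f \<le> -X - Y" using hS hX hY by simp
    have S0: "0 < -X - Y" using hS0 hX hY by simp
    have PXa: "(18392868/10000000)*X \<le> PX" and PXb: "PX \<le> (18392867/10000000)*X" using bPX2[OF hX] by auto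
    have P2Xa: "(3382976/1000000)*X \<le> P2X" and P2Xb: "P2X \<le> (33829755/10000000)*X" using bP2X2[OF hX] by auto
    have PYa: "(18392868/10000000)*Y \<le> PY" and PYb: "PY \<le> (18392867/10000000)*Y" using bPY2[OF hY] by auto
    have P2Ya: "(3382976/1000000)*Y \<le> P2Y" and P2Yb: "P2Y \<le> (33829755/10000000)*Y" using bP2Y2[OF hY] by auto
    note facts = za zb zc fF S S0 hX hY PXa PXb P2Xa P2Xb PYa PYb P2Ya P2Yb
    show ?thesis
    proof (cases "(-1)*Y - (-1)*X \<le> 0")
      case True
      have c0: "0 < (-2)*zb + (-1)*zc" using facts True by linarith
      have c1: "(-1)*za - (-1)*zb + (-1)*zc \<le> 0" using facts True by linarith
      have c2: "(-2)*za + (-1)*zb < 0" using facts True by linarith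
      have "GB (-1) (-1) za zb zc" unfolding GB_def using c0 c1 c2 by simp
      thus ?thesis by blast
    next
      case False
      note facts = facts False
      have c0: "0 < (-1)*zb + (-1)*zc" using facts  by linarith
      have c1: "(-1)*za - (-1)*zb + (0)*zc \<le> 0" using facts  by linarith
      have c2: "(-1)*za + (-1)*zb < 0" using facts  by linarith
      have "GB (0) (-1) za zb zc" unfolding GB_def using c0 c1 c2 by simp
      thus ?thesis by blast
    qed
  qed
  have Q3: "0 \<le> X \<Longrightarrow> Y \<le> 0 \<Longrightarrow> ?thesis"
  proof -
    assume hX: "0 \<le> X" and hY: "Y \<le> 0"
    have S: "200*f \<le> X - Y" using hS hX hY by simp
    have S0: "0 < X - Y" using hS0 hX hY by simp
    have PXa: "(18392867/10000000)*X \<le> PX" and PXb: "PX \<le> (18392868/10000000)*X" using bPX1[OF hX] by auto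
    have P2Xa: "(33829755/10000000)*X \<le> P2X" and P2Xb: "P2X \<le> (3382976/1000000)*X" using bP2X1[OF hX] by auto
    have PYa: "(18392868/10000000)*Y \<le> PY" and PYb: "PY \<le> (18392867/10000000)*Y" using bPY2[OF hY] by auto
    have P2Ya: "(3382976/1000000)*Y \<le> P2Y" and P2Yb: "P2Y \<le> (33829755/10000000)*Y" using bP2Y2[OF hY] by auto
    note facts = za zb zc fF S S0 hX hY PXa PXb P2Xa P2Xb PYa PYb P2Ya P2Yb
    show ?thesis
    proof (cases "(5)*Y - (-9)*X \<le> 0")
      case True
      have c0: "0 < (0)*zb + (-1)*zc" using facts True by linarith
      have c1: "(-1)*za - (-1)*zb + (1)*zc \<le> 0" using facts True by linarith
      have c2: "(0)*za + (-1)*zb < 0" using facts True by linarith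
      have "GB (1) (-1) za zb zc" unfolding GB_def using c0 c1 c2 by simp
      thus ?thesis by blast
    next
      case False
      note facts = facts False
      show ?thesis
      proof (cases "(9)*Y - (-4)*X \<le> 0")
        case True
        have c0: "0 < (1)*zb + (0)*zc" using facts True by linarith
        have c1: "(0)*za - (0)*zb + (1)*zc \<le> 0" using facts True by linarith
        have c2: "(1)*za + (0)*zb < 0" using facts True by linarith
        have "GB (1) (0) za zb zc" unfolding GB_def using c0 c1 c2 by simp
        thus ?thesis by blast
      next
        case False
        note facts = facts False
        have c0: "0 < (2)*zb + (1)*zc" using facts  by linarith
        have c1: "(1)*za - (1)*zb + (1)*zc \<le> 0" using facts  by linarith
        have c2: "(2)*za + (1)*zb < 0" using facts  by linarith
        have "GB (1) (1) za zb zc" unfolding GB_def using c0 c1 c2 by simp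
        thus ?thesis by blast
      qed
    qed
  qed
  have "0 \<le> X \<or> X \<le> 0" "0 \<le> Y \<or> Y \<le> 0" by linarith+
  thus ?thesis using Q0 Q1 Q2 Q3 by blast
qed

lemma U_at:
  "U p q m = (p+q)*U 1 0 m + q*U 1 0 (Suc m)"
  "U p q (Suc m) = (p+q)*U 1 0 (Suc m) + q*U 1 0 (Suc (Suc m))"
  "U p q (Suc (Suc m)) = q*U 1 0 m - q*U 1 0 (Suc m) + p*U 1 0 (Suc (Suc m))"
proof -
  show "U p q m = (p+q)*U 1 0 m + q*U 1 0 (Suc m)" by (rule U_lin)
  show "U p q (Suc m) = (p+q)*U 1 0 (Suc m) + q*U 1 0 (Suc (Suc m))" by (rule U_lin)
  show "U p q (Suc (Suc m)) = q*U 1 0 m - q*U 1 0 (Suc m) + p*U 1 0 (Suc (Suc m))"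
    using U_lin[of p q "Suc (Suc m)"] by (simp add: algebra_simps)
qed

lemma pos_transfer:
  fixes D :: real and x :: int
  assumes "D > 0"
  shows "(0 < D * of_int x) = (0 < x)" "(D * of_int x \<le> 0) = (x \<le> 0)" "(D * of_int x < 0) = (x < 0)"
  using assms by (auto simp: zero_less_mult_iff mult_le_0_iff mult_less_0_iff)

lemma transA:
  fixes D :: real and p q w0 w1 w2 :: int
  assumes D: "D > 0" and G: "GA (of_int p) (of_int q) (D*of_int w0) (D*of_int w1) (D*of_int w2)"
  shows "0 < q*w0 - q*w1 + p*w2 \<and> (p+q)*w1 + q*w2 \<le> 0 \<and> (p+q)*w0 + q*w1 < 0"
proof -
  have e1: "of_int q*(D*of_int w0) - of_int q*(D*of_int w1) + of_int p*(D*of_int w2) = D * of_int (q*w0 - q*w1 + p*w2)"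
    by (simp add: algebra_simps)
  have e2: "(of_int p + of_int q)*(D*of_int w1) + of_int q*(D*of_int w2) = D * of_int ((p+q)*w1 + q*w2)"
    by (simp add: algebra_simps)
  have e3: "(of_int p + of_int q)*(D*of_int w0) + of_int q*(D*of_int w1) = D * of_int ((p+q)*w0 + q*w1)"
    by (simp add: algebra_simps)
  show ?thesis using G unfolding GA_def e1 e2 e3 pos_transfer[OF D] by simp
qed

lemma transB:
  fixes D :: real and p q w0 w1 w2 :: int
  assumes D: "D > 0" and G: "GB (of_int p) (of_int q) (D*of_int w0) (D*of_int w1) (D*of_int w2)"
  shows "0 < (p+q)*w1 + q*w2 \<and> q*w0 - q*w1 + p*w2 \<le> 0 \<and> (p+q)*w0 + q*w1 < 0"
proof -
  have e1: "of_int q*(D*of_int w0) - of_int q*(D*of_int w1) + of_int p*(D*of_int w2) = D * of_int (q*w0 - q*w1 + p*w2)"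
    by (simp add: algebra_simps)
  have e2: "(of_int p + of_int q)*(D*of_int w1) + of_int q*(D*of_int w2) = D * of_int ((p+q)*w1 + q*w2)"
    by (simp add: algebra_simps)
  have e3: "(of_int p + of_int q)*(D*of_int w0) + of_int q*(D*of_int w1) = D * of_int ((p+q)*w0 + q*w1)"
    by (simp add: algebra_simps)
  show ?thesis using G unfolding GB_def e1 e2 e3 pos_transfer[OF D] by simp
qed

definition C8 :: "(int \<times> int) set" where
  "C8 = {(1,0),(0,1),(1,1),(1,-1),(-1,0),(0,-1),(-1,-1),(-1,1)}"

lemma Q0_formula:
  fixes \<phi> :: real and p q :: int
  assumes c: "\<phi>^3 = \<phi>^2 + \<phi> + 1"
  shows "Qf \<phi> (\<phi>*of_int q) (\<phi>*of_int p - of_int q) = \<phi>^2*(of_int p^2 + of_int p*of_int q + of_int q^2) - \<phi>*of_int p*of_int q + of_int q^2"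
proof -
  have "Qf \<phi> (\<phi>*of_int q) (\<phi>*of_int p - of_int q) - (\<phi>^2*(of_int p^2 + of_int p*of_int q + of_int q^2) - \<phi>*of_int p*of_int q + of_int q^2)
      = (\<phi>^3-\<phi>^2-\<phi>-1) * (\<phi>*of_int p*of_int q)"
    unfolding Qf_def by (simp add: algebra_simps power2_eq_square power3_eq_cube)
  thus ?thesis using c by simp
qed

lemma Q0_bound:
  fixes \<phi> :: real
  assumes c: "\<phi>^3 = \<phi>^2 + \<phi> + 1" and pq: "(p,q) \<in> C8"
  shows "Qf \<phi> (\<phi>*of_int q) (\<phi>*of_int p - of_int q) \<le> 93097/10000"
proof -
  have b: "18392867/10000000 \<le> \<phi> \<and> \<phi> \<le> 4598217/2500000" using phi_bounds[OF c] by simp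
  have b2: "6765951/2000000 \<le> \<phi>^2 \<and> \<phi>^2 \<le> 52859/15625" using phi2_bounds b by blast
  note bb = conjunct1[OF b] conjunct2[OF b] conjunct1[OF b2] conjunct2[OF b2]
  show ?thesis using pq bb unfolding C8_def Q0_formula[OF c] by auto
qed

lemma atom_bounds:
  fixes lo hi a X :: real
  assumes "lo \<le> a" "a \<le> hi"
  shows "0 \<le> X \<Longrightarrow> lo*X \<le> a*X \<and> a*X \<le> hi*X"
    and "X \<le> 0 \<Longrightarrow> hi*X \<le> a*X \<and> a*X \<le> lo*X"
  using assms by (auto intro: mult_right_mono mult_right_mono_neg)

definition SA :: "int \<Rightarrow> int \<Rightarrow> nat \<Rightarrow> bool" where
  "SA p q m \<longleftrightarrow> 0 < U p q (Suc (Suc m)) \<and> U p q (Suc m) \<le> 0 \<and> U p q m < 0"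
definition SB :: "int \<Rightarrow> int \<Rightarrow> nat \<Rightarrow> bool" where
  "SB p q m \<longleftrightarrow> 0 < U p q (Suc m) \<and> U p q (Suc (Suc m)) \<le> 0 \<and> U p q m < 0"

lemma fromGA:
  fixes D :: real
  assumes D: "D > 0"
    and G: "GA (of_int p) (of_int q) (D*of_int (U 1 0 m)) (D*of_int (U 1 0 (Suc m))) (D*of_int (U 1 0 (Suc (Suc m))))"
  shows "SA p q m"
  using transA[OF D G] unfolding SA_def U_at[of p q m] by (simp add: algebra_simps)

lemma fromGB:
  fixes D :: real
  assumes D: "D > 0"
    and G: "GB (of_int p) (of_int q) (D*of_int (U 1 0 m)) (D*of_int (U 1 0 (Suc m))) (D*of_int (U 1 0 (Suc (Suc m))))"
  shows "SB p q m"
  using transB[OF D G] unfolding SB_def U_at[of p q m] by (simp add: algebra_simps)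

lemma analytic:
  fixes \<phi> :: real and m :: nat
  assumes c: "\<phi>^3 = \<phi>^2 + \<phi> + 1" and m: "5 \<le> m"
  defines "X \<equiv> ee \<phi> 1 0 m" and "Y \<equiv> ee \<phi> 1 0 (Suc m)" and "F \<equiv> FF \<phi> 1 0 m"
  shows "200*\<bar>F\<bar> \<le> \<bar>X\<bar> + \<bar>Y\<bar>" and "0 < \<bar>X\<bar> + \<bar>Y\<bar>"
proof -
  have b: "18392867/10000000 \<le> \<phi> \<and> \<phi> \<le> 4598217/2500000" using phi_bounds[OF c] by simp
  have b2: "6765951/2000000 \<le> \<phi>^2 \<and> \<phi>^2 \<le> 52859/15625" using phi2_bounds b by blast
  note bb = conjunct1[OF b] conjunct2[OF b] conjunct1[OF b2] conjunct2[OF b2]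
  have phipos: "\<phi> > 0" using bb by linarith
  have QXY: "Qf \<phi> X Y = \<phi>^(m+2)"
    using Qf_pow[OF c, of 1 0 m] unfolding X_def Y_def by (simp add: Qf_def power_add power2_eq_square)
  have h1: "(\<phi>^2-\<phi>)*(X*Y) \<le> 2*\<phi>*(\<bar>X\<bar>*\<bar>Y\<bar>)"
  proof -
    have "X*Y \<le> \<bar>X\<bar>*\<bar>Y\<bar>" by (metis abs_ge_self abs_mult)
    hence "(\<phi>^2-\<phi>)*(X*Y) \<le> (\<phi>^2-\<phi>)*(\<bar>X\<bar>*\<bar>Y\<bar>)" using bb by (intro mult_left_mono) auto
    also have "\<dots> \<le> 2*\<phi>*(\<bar>X\<bar>*\<bar>Y\<bar>)" using bb by (intro mult_right_mono) auto
    finally show ?thesis .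
  qed
  have h2: "Y^2 \<le> \<phi>*Y^2" using bb by (intro mult_right_mono[of 1 \<phi> "Y^2", simplified]) auto
  have h3: "(\<bar>X\<bar>+\<bar>Y\<bar>)^2 = X^2 + 2*(\<bar>X\<bar>*\<bar>Y\<bar>) + Y^2" by (simp add: power2_sum)
  have "Qf \<phi> X Y = Y^2 + (\<phi>^2-\<phi>)*(X*Y) + \<phi>*X^2" unfolding Qf_def by (simp add: algebra_simps)
  also have "\<dots> \<le> \<phi>*(\<bar>X\<bar>+\<bar>Y\<bar>)^2" unfolding h3 using h1 h2 by (simp add: algebra_simps)
  finally have "\<phi>^(m+2) \<le> \<phi>*(\<bar>X\<bar>+\<bar>Y\<bar>)^2" using QXY by simp
  hence "\<phi> * \<phi>^(m+1) \<le> \<phi>*(\<bar>X\<bar>+\<bar>Y\<bar>)^2" by simp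
  hence S2: "\<phi>^(m+1) \<le> (\<bar>X\<bar>+\<bar>Y\<bar>)^2" using phipos by (simp add: mult_le_cancel_left_pos)
  have "0 < \<phi>^(m+1)" using phipos by simp
  hence "0 < (\<bar>X\<bar>+\<bar>Y\<bar>)^2" using S2 by linarith
  thus "0 < \<bar>X\<bar> + \<bar>Y\<bar>" by (metis abs_ge_zero add_nonneg_nonneg less_eq_real_def power_zero_numeral zero_less_numeral zero_power2 order.strict_iff_not)
  have Fm: "\<phi>^m * F = \<phi>^2-\<phi>-1" using FF_pow[OF c, of m 1 0] unfolding F_def by simp
  have g: "0 \<le> \<phi>^2-\<phi>-1" "\<phi>^2-\<phi>-1 \<le> 5437/10000" using bb by linarith+
  have g2: "(\<phi>^2-\<phi>-1)^2 \<le> (5437/10000)^2" using g by (intro power_mono) auto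
  have e1: "(200*\<bar>F\<bar>)^2 * \<phi>^(2*m) = 40000*(\<phi>^2-\<phi>-1)^2"
  proof -
    have "(200*\<bar>F\<bar>)^2 * \<phi>^(2*m) = 40000*(\<bar>\<phi>^m * F\<bar>)^2"
      using phipos by (simp add: power_mult_distrib power_mult abs_mult algebra_simps)
    also have "\<dots> = 40000*(\<phi>^2-\<phi>-1)^2" using Fm g by simp
    finally show ?thesis .
  qed
  have p16: "(9/5::real)^16 \<le> \<phi>^16" using bb by (intro power_mono) auto
  have "\<phi>^16 \<le> \<phi>^(3*m+1)" using bb m by (intro power_increasing) auto
  moreover have "(12000::real) \<le> (9/5)^16" by (simp add: power_divide)
  moreover have "(5437/10000::real)^2 = 29560969/100000000" by (simp add: power_divide)
  ultimately have "40000*(\<phi>^2-\<phi>-1)^2 \<le> \<phi>^(3*m+1)" using p16 g2 by linarith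
  also have "\<phi>^(3*m+1) = \<phi>^(m+1) * \<phi>^(2*m)" by (simp add: power_add[symmetric])
  finally have "(200*\<bar>F\<bar>)^2 * \<phi>^(2*m) \<le> \<phi>^(m+1) * \<phi>^(2*m)" using e1 by simp
  hence "(200*\<bar>F\<bar>)^2 \<le> \<phi>^(m+1)" using phipos by (simp add: mult_le_cancel_right_pos)
  hence "(200*\<bar>F\<bar>)^2 \<le> (\<bar>X\<bar>+\<bar>Y\<bar>)^2" using S2 by linarith
  thus "200*\<bar>F\<bar> \<le> \<bar>X\<bar> + \<bar>Y\<bar>" by (rule power2_le_imp_le) simp
qed

lemma largeA:
  fixes \<phi> :: real and m :: nat
  assumes c: "\<phi>^3 = \<phi>^2 + \<phi> + 1" and m: "5 \<le> m"
  shows "\<exists>p q. (p,q) \<in> C8 \<and> SA p q m"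
proof -
  have b: "18392867/10000000 \<le> \<phi> \<and> \<phi> \<le> 4598217/2500000" using phi_bounds[OF c] by simp
  have b2: "6765951/2000000 \<le> \<phi>^2 \<and> \<phi>^2 \<le> 52859/15625" using phi2_bounds b by blast
  note bb = conjunct1[OF b] conjunct2[OF b] conjunct1[OF b2] conjunct2[OF b2]
  have lo': "18392867/10000000 \<le> \<phi>" and hi': "\<phi> \<le> 18392868/10000000"
    and lo2': "33829755/10000000 \<le> \<phi>^2" and hi2': "\<phi>^2 \<le> 3382976/1000000" using bb by simp_all
  define X where "X = ee \<phi> 1 0 m"
  define Y where "Y = ee \<phi> 1 0 (Suc m)"
  define F where "F = FF \<phi> 1 0 m"
  define D where "D = 3*\<phi>^2-2*\<phi>-1"
  have Dpos: "D > 0" unfolding D_def using bb by linarith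
  have d2: "D * of_int (U 1 0 (Suc (Suc m))) = X + (2*\<phi>-1)*Y + F"
    using D_ids(1)[OF c, of 1 0 m] unfolding X_def Y_def F_def D_def by simp
  have d1: "D * of_int (U 1 0 (Suc m)) = \<phi>*X - (\<phi>^2-\<phi>-1)*Y + \<phi>*F"
    using D_ids(2)[OF c, of 1 0 m] unfolding X_def Y_def F_def D_def by simp
  have d0: "D * of_int (U 1 0 m) = (-2*\<phi>^2+2*\<phi>+1)*X - Y + \<phi>^2*F"
    using D_ids(3)[OF c, of 1 0 m] unfolding X_def Y_def F_def D_def by simp
  have hz0: "D * of_int (U 1 0 m) = -2*(\<phi>^2*X) + 2*(\<phi>*X) + X - Y + \<phi>^2*F" using d0 by (simp add: algebra_simps)
  have hz1: "D * of_int (U 1 0 (Suc m)) = \<phi>*X - \<phi>^2*Y + \<phi>*Y + Y + \<phi>*F" using d1 by (simp add: algebra_simps)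
  have hz2: "D * of_int (U 1 0 (Suc (Suc m))) = X + 2*(\<phi>*Y) - Y + F" using d2 by (simp add: algebra_simps)
  have aF1: "\<bar>\<phi>*F\<bar> \<le> 2*\<bar>F\<bar>" using bb by (simp add: abs_mult mult_right_mono)
  have aF2: "\<bar>\<phi>^2*F\<bar> \<le> 4*\<bar>F\<bar>" using bb by (simp add: abs_mult mult_right_mono)
  have f1: "-\<bar>F\<bar> \<le> F" "F \<le> \<bar>F\<bar>" by simp_all
  have f2: "-(2*\<bar>F\<bar>) \<le> \<phi>*F" "\<phi>*F \<le> 2*\<bar>F\<bar>" using aF1 by (simp_all add: abs_le_iff)
  have f3: "-(4*\<bar>F\<bar>) \<le> \<phi>^2*F" "\<phi>^2*F \<le> 4*\<bar>F\<bar>" using aF2 by (simp_all add: abs_le_iff)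
  have S: "200*\<bar>F\<bar> \<le> \<bar>X\<bar> + \<bar>Y\<bar>" "0 < \<bar>X\<bar> + \<bar>Y\<bar>"
    using analytic[OF c m] unfolding X_def Y_def F_def by simp_all
  note cov = coverA[where X=X and Y=Y and F=F and PX="\<phi>*X" and P2X="\<phi>^2*X" and PY="\<phi>*Y"
      and P2Y="\<phi>^2*Y" and PF="\<phi>*F" and P2F="\<phi>^2*F" and za="D * of_int (U 1 0 m)"
      and zb="D * of_int (U 1 0 (Suc m))" and zc="D * of_int (U 1 0 (Suc (Suc m)))" and f="\<bar>F\<bar>",
      OF hz0 hz1 hz2 atom_bounds(1)[OF lo' hi'] atom_bounds(2)[OF lo' hi'] atom_bounds(1)[OF lo2' hi2']
      atom_bounds(2)[OF lo2' hi2'] atom_bounds(1)[OF lo' hi'] atom_bounds(2)[OF lo' hi']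
      atom_bounds(1)[OF lo2' hi2'] atom_bounds(2)[OF lo2' hi2'] f1 _ _ _ _ S]
  have cov': "GA 1 (- 1) (D * of_int (U 1 0 m)) (D * of_int (U 1 0 (Suc m))) (D * of_int (U 1 0 (Suc (Suc m))))
    \<or> GA 1 0 (D * of_int (U 1 0 m)) (D * of_int (U 1 0 (Suc m))) (D * of_int (U 1 0 (Suc (Suc m))))
    \<or> GA 1 1 (D * of_int (U 1 0 m)) (D * of_int (U 1 0 (Suc m))) (D * of_int (U 1 0 (Suc (Suc m))))
    \<or> GA 0 1 (D * of_int (U 1 0 m)) (D * of_int (U 1 0 (Suc m))) (D * of_int (U 1 0 (Suc (Suc m))))
    \<or> GA (- 1) 1 (D * of_int (U 1 0 m)) (D * of_int (U 1 0 (Suc m))) (D * of_int (U 1 0 (Suc (Suc m))))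
    \<or> GA (- 1) 0 (D * of_int (U 1 0 m)) (D * of_int (U 1 0 (Suc m))) (D * of_int (U 1 0 (Suc (Suc m))))
    \<or> GA (- 1) (- 1) (D * of_int (U 1 0 m)) (D * of_int (U 1 0 (Suc m))) (D * of_int (U 1 0 (Suc (Suc m))))
    \<or> GA 0 (- 1) (D * of_int (U 1 0 m)) (D * of_int (U 1 0 (Suc m))) (D * of_int (U 1 0 (Suc (Suc m))))
    \<or> (0 < D * of_int (U 1 0 (Suc (Suc m))) \<and> D * of_int (U 1 0 m) < 0 \<and>
        0 < - (D * of_int (U 1 0 m)) + D * of_int (U 1 0 (Suc m)) + D * of_int (U 1 0 (Suc (Suc m))) \<and>
        0 \<le> D * of_int (U 1 0 (Suc (Suc m))))
    \<or> (0 < - (D * of_int (U 1 0 (Suc (Suc m)))) \<and> - (D * of_int (U 1 0 m)) < 0 \<and>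
        0 < D * of_int (U 1 0 m) - D * of_int (U 1 0 (Suc m)) - D * of_int (U 1 0 (Suc (Suc m))) \<and>
        D * of_int (U 1 0 (Suc (Suc m))) \<le> 0)"
    by (rule cov) (use f2 f3 in auto)
  have GAex: "\<And>p q. (p,q) \<in> C8 \<Longrightarrow> GA (of_int p) (of_int q) (D * of_int (U 1 0 m)) (D * of_int (U 1 0 (Suc m))) (D * of_int (U 1 0 (Suc (Suc m)))) \<Longrightarrow> ?thesis"
    using fromGA[OF Dpos] by blast
  have E1: "- (D * of_int (U 1 0 m)) + D * of_int (U 1 0 (Suc m)) + D * of_int (U 1 0 (Suc (Suc m)))
     = D * of_int (- U 1 0 m + U 1 0 (Suc m) + U 1 0 (Suc (Suc m)))" by (simp add: algebra_simps)
  have E2: "D * of_int (U 1 0 m) - D * of_int (U 1 0 (Suc m)) - D * of_int (U 1 0 (Suc (Suc m)))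
     = D * of_int (U 1 0 m - U 1 0 (Suc m) - U 1 0 (Suc (Suc m)))" by (simp add: algebra_simps)
  have E3: "- (D * of_int x) = D * of_int (- x)" for x by simp
  note PT = pos_transfer[OF Dpos]
  have G0: "GA (1) (- 1) (D * of_int (U 1 0 m)) (D * of_int (U 1 0 (Suc m))) (D * of_int (U 1 0 (Suc (Suc m)))) \<Longrightarrow> ?thesis" using GAex[of 1 "-1"] by (simp add: C8_def)
  have G1: "GA (1) (0) (D * of_int (U 1 0 m)) (D * of_int (U 1 0 (Suc m))) (D * of_int (U 1 0 (Suc (Suc m)))) \<Longrightarrow> ?thesis" using GAex[of 1 0] by (simp add: C8_def)
  have G2: "GA (1) (1) (D * of_int (U 1 0 m)) (D * of_int (U 1 0 (Suc m))) (D * of_int (U 1 0 (Suc (Suc m)))) \<Longrightarrow> ?thesis" using GAex[of 1 1] by (simp add: C8_def)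
  have G3: "GA (0) (1) (D * of_int (U 1 0 m)) (D * of_int (U 1 0 (Suc m))) (D * of_int (U 1 0 (Suc (Suc m)))) \<Longrightarrow> ?thesis" using GAex[of 0 1] by (simp add: C8_def)
  have G4: "GA (- 1) (1) (D * of_int (U 1 0 m)) (D * of_int (U 1 0 (Suc m))) (D * of_int (U 1 0 (Suc (Suc m)))) \<Longrightarrow> ?thesis" using GAex[of "-1" 1] by (simp add: C8_def)
  have G5: "GA (- 1) (0) (D * of_int (U 1 0 m)) (D * of_int (U 1 0 (Suc m))) (D * of_int (U 1 0 (Suc (Suc m)))) \<Longrightarrow> ?thesis" using GAex[of "-1" 0] by (simp add: C8_def)
  have G6: "GA (- 1) (- 1) (D * of_int (U 1 0 m)) (D * of_int (U 1 0 (Suc m))) (D * of_int (U 1 0 (Suc (Suc m)))) \<Longrightarrow> ?thesis" using GAex[of "-1" "-1"] by (simp add: C8_def)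
  have G7: "GA (0) (- 1) (D * of_int (U 1 0 m)) (D * of_int (U 1 0 (Suc m))) (D * of_int (U 1 0 (Suc (Suc m)))) \<Longrightarrow> ?thesis" using GAex[of 0 "-1"] by (simp add: C8_def)
  have Sp1: "0 < D * of_int (U 1 0 (Suc (Suc m))) \<and> D * of_int (U 1 0 m) < 0 \<and>
        0 < - (D * of_int (U 1 0 m)) + D * of_int (U 1 0 (Suc m)) + D * of_int (U 1 0 (Suc (Suc m))) \<and>
        0 \<le> D * of_int (U 1 0 (Suc (Suc m))) \<Longrightarrow> ?thesis"
  proof -
    assume h: "0 < D * of_int (U 1 0 (Suc (Suc m))) \<and> D * of_int (U 1 0 m) < 0 \<and>
        0 < - (D * of_int (U 1 0 m)) + D * of_int (U 1 0 (Suc m)) + D * of_int (U 1 0 (Suc (Suc m))) \<and>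
        0 \<le> D * of_int (U 1 0 (Suc (Suc m)))"
    hence h': "0 < U 1 0 (Suc (Suc m))" "U 1 0 m < 0" "0 < - U 1 0 m + U 1 0 (Suc m) + U 1 0 (Suc (Suc m))"
      unfolding E1 PT by auto
    show ?thesis
    proof (cases "U 1 0 (Suc m) \<le> 0")
      case True
      have "SA 1 0 m" unfolding SA_def using h' True by simp
      thus ?thesis unfolding C8_def by blast
    next
      case False
      have "SA 1 (-1) m" unfolding SA_def using h' False by (simp add: U_at[of 1 "-1"])
      thus ?thesis unfolding C8_def by blast
    qed
  qed
  have Sp2: "0 < - (D * of_int (U 1 0 (Suc (Suc m)))) \<and> - (D * of_int (U 1 0 m)) < 0 \<and>
        0 < D * of_int (U 1 0 m) - D * of_int (U 1 0 (Suc m)) - D * of_int (U 1 0 (Suc (Suc m))) \<and>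
        D * of_int (U 1 0 (Suc (Suc m))) \<le> 0 \<Longrightarrow> ?thesis"
  proof -
    assume h: "0 < - (D * of_int (U 1 0 (Suc (Suc m)))) \<and> - (D * of_int (U 1 0 m)) < 0 \<and>
        0 < D * of_int (U 1 0 m) - D * of_int (U 1 0 (Suc m)) - D * of_int (U 1 0 (Suc (Suc m))) \<and>
        D * of_int (U 1 0 (Suc (Suc m))) \<le> 0"
    hence h': "U 1 0 (Suc (Suc m)) < 0" "0 < U 1 0 m" "0 < U 1 0 m - U 1 0 (Suc m) - U 1 0 (Suc (Suc m))"
      unfolding E2 E3 PT by auto
    show ?thesis
    proof (cases "U 1 0 (Suc m) < 0")
      case True
      have "SA (-1) 1 m" unfolding SA_def using h' True by (simp add: U_at[of "-1" 1])
      thus ?thesis unfolding C8_def by blast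
    next
      case False
      have "SA (-1) 0 m" unfolding SA_def using h' False by (simp add: U_at[of "-1" 0])
      thus ?thesis unfolding C8_def by blast
    qed
  qed
  show ?thesis using cov' G0 G1 G2 G3 G4 G5 G6 G7 Sp1 Sp2 by blast
qed

lemma largeB:
  fixes \<phi> :: real and m :: nat
  assumes c: "\<phi>^3 = \<phi>^2 + \<phi> + 1" and m: "5 \<le> m"
  shows "\<exists>p q. (p,q) \<in> C8 \<and> SB p q m"
proof -
  have b: "18392867/10000000 \<le> \<phi> \<and> \<phi> \<le> 4598217/2500000" using phi_bounds[OF c] by simp
  have b2: "6765951/2000000 \<le> \<phi>^2 \<and> \<phi>^2 \<le> 52859/15625" using phi2_bounds b by blast
  note bb = conjunct1[OF b] conjunct2[OF b] conjunct1[OF b2] conjunct2[OF b2]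
  have lo': "18392867/10000000 \<le> \<phi>" and hi': "\<phi> \<le> 18392868/10000000"
    and lo2': "33829755/10000000 \<le> \<phi>^2" and hi2': "\<phi>^2 \<le> 3382976/1000000" using bb by simp_all
  define X where "X = ee \<phi> 1 0 m"
  define Y where "Y = ee \<phi> 1 0 (Suc m)"
  define F where "F = FF \<phi> 1 0 m"
  define D where "D = 3*\<phi>^2-2*\<phi>-1"
  have Dpos: "D > 0" unfolding D_def using bb by linarith
  have d2: "D * of_int (U 1 0 (Suc (Suc m))) = X + (2*\<phi>-1)*Y + F"
    using D_ids(1)[OF c, of 1 0 m] unfolding X_def Y_def F_def D_def by simp
  have d1: "D * of_int (U 1 0 (Suc m)) = \<phi>*X - (\<phi>^2-\<phi>-1)*Y + \<phi>*F"
    using D_ids(2)[OF c, of 1 0 m] unfolding X_def Y_def F_def D_def by simp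
  have d0: "D * of_int (U 1 0 m) = (-2*\<phi>^2+2*\<phi>+1)*X - Y + \<phi>^2*F"
    using D_ids(3)[OF c, of 1 0 m] unfolding X_def Y_def F_def D_def by simp
  have hz0: "D * of_int (U 1 0 m) = -2*(\<phi>^2*X) + 2*(\<phi>*X) + X - Y + \<phi>^2*F" using d0 by (simp add: algebra_simps)
  have hz1: "D * of_int (U 1 0 (Suc m)) = \<phi>*X - \<phi>^2*Y + \<phi>*Y + Y + \<phi>*F" using d1 by (simp add: algebra_simps)
  have hz2: "D * of_int (U 1 0 (Suc (Suc m))) = X + 2*(\<phi>*Y) - Y + F" using d2 by (simp add: algebra_simps)
  have aF1: "\<bar>\<phi>*F\<bar> \<le> 2*\<bar>F\<bar>" using bb by (simp add: abs_mult mult_right_mono)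
  have aF2: "\<bar>\<phi>^2*F\<bar> \<le> 4*\<bar>F\<bar>" using bb by (simp add: abs_mult mult_right_mono)
  have f1: "-\<bar>F\<bar> \<le> F" "F \<le> \<bar>F\<bar>" by simp_all
  have f2: "-(2*\<bar>F\<bar>) \<le> \<phi>*F" "\<phi>*F \<le> 2*\<bar>F\<bar>" using aF1 by (simp_all add: abs_le_iff)
  have f3: "-(4*\<bar>F\<bar>) \<le> \<phi>^2*F" "\<phi>^2*F \<le> 4*\<bar>F\<bar>" using aF2 by (simp_all add: abs_le_iff)
  have S: "200*\<bar>F\<bar> \<le> \<bar>X\<bar> + \<bar>Y\<bar>" "0 < \<bar>X\<bar> + \<bar>Y\<bar>"
    using analytic[OF c m] unfolding X_def Y_def F_def by simp_all
  note cov = coverB[where X=X and Y=Y and F=F and PX="\<phi>*X" and P2X="\<phi>^2*X" and PY="\<phi>*Y"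
      and P2Y="\<phi>^2*Y" and PF="\<phi>*F" and P2F="\<phi>^2*F" and za="D * of_int (U 1 0 m)"
      and zb="D * of_int (U 1 0 (Suc m))" and zc="D * of_int (U 1 0 (Suc (Suc m)))" and f="\<bar>F\<bar>",
      OF hz0 hz1 hz2 atom_bounds(1)[OF lo' hi'] atom_bounds(2)[OF lo' hi'] atom_bounds(1)[OF lo2' hi2']
      atom_bounds(2)[OF lo2' hi2'] atom_bounds(1)[OF lo' hi'] atom_bounds(2)[OF lo' hi']
      atom_bounds(1)[OF lo2' hi2'] atom_bounds(2)[OF lo2' hi2'] f1 _ _ _ _ S]
  have cov': "GB (0) (1) (D * of_int (U 1 0 m)) (D * of_int (U 1 0 (Suc m))) (D * of_int (U 1 0 (Suc (Suc m))))
    \<or> GB (- 1) (1) (D * of_int (U 1 0 m)) (D * of_int (U 1 0 (Suc m))) (D * of_int (U 1 0 (Suc (Suc m))))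
    \<or> GB (- 1) (0) (D * of_int (U 1 0 m)) (D * of_int (U 1 0 (Suc m))) (D * of_int (U 1 0 (Suc (Suc m))))
    \<or> GB (- 1) (- 1) (D * of_int (U 1 0 m)) (D * of_int (U 1 0 (Suc m))) (D * of_int (U 1 0 (Suc (Suc m))))
    \<or> GB (0) (- 1) (D * of_int (U 1 0 m)) (D * of_int (U 1 0 (Suc m))) (D * of_int (U 1 0 (Suc (Suc m))))
    \<or> GB (1) (- 1) (D * of_int (U 1 0 m)) (D * of_int (U 1 0 (Suc m))) (D * of_int (U 1 0 (Suc (Suc m))))
    \<or> GB (1) (0) (D * of_int (U 1 0 m)) (D * of_int (U 1 0 (Suc m))) (D * of_int (U 1 0 (Suc (Suc m))))
    \<or> GB (1) (1) (D * of_int (U 1 0 m)) (D * of_int (U 1 0 (Suc m))) (D * of_int (U 1 0 (Suc (Suc m))))"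
    by (rule cov) (use f2 f3 in auto)
  have GBex: "\<And>p q. (p,q) \<in> C8 \<Longrightarrow> GB (of_int p) (of_int q) (D * of_int (U 1 0 m)) (D * of_int (U 1 0 (Suc m))) (D * of_int (U 1 0 (Suc (Suc m)))) \<Longrightarrow> ?thesis"
    using fromGB[OF Dpos] by blast
  have E1: "- (D * of_int (U 1 0 m)) + D * of_int (U 1 0 (Suc m)) + D * of_int (U 1 0 (Suc (Suc m)))
     = D * of_int (- U 1 0 m + U 1 0 (Suc m) + U 1 0 (Suc (Suc m)))" by (simp add: algebra_simps)
  have E2: "D * of_int (U 1 0 m) - D * of_int (U 1 0 (Suc m)) - D * of_int (U 1 0 (Suc (Suc m)))
     = D * of_int (U 1 0 m - U 1 0 (Suc m) - U 1 0 (Suc (Suc m)))" by (simp add: algebra_simps)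
  have E3: "- (D * of_int x) = D * of_int (- x)" for x by simp
  note PT = pos_transfer[OF Dpos]
  have G0: "GB (0) (1) (D * of_int (U 1 0 m)) (D * of_int (U 1 0 (Suc m))) (D * of_int (U 1 0 (Suc (Suc m)))) \<Longrightarrow> ?thesis" using GBex[of 0 1] by (simp add: C8_def)
  have G1: "GB (- 1) (1) (D * of_int (U 1 0 m)) (D * of_int (U 1 0 (Suc m))) (D * of_int (U 1 0 (Suc (Suc m)))) \<Longrightarrow> ?thesis" using GBex[of "-1" 1] by (simp add: C8_def)
  have G2: "GB (- 1) (0) (D * of_int (U 1 0 m)) (D * of_int (U 1 0 (Suc m))) (D * of_int (U 1 0 (Suc (Suc m)))) \<Longrightarrow> ?thesis" using GBex[of "-1" 0] by (simp add: C8_def)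
  have G3: "GB (- 1) (- 1) (D * of_int (U 1 0 m)) (D * of_int (U 1 0 (Suc m))) (D * of_int (U 1 0 (Suc (Suc m)))) \<Longrightarrow> ?thesis" using GBex[of "-1" "-1"] by (simp add: C8_def)
  have G4: "GB (0) (- 1) (D * of_int (U 1 0 m)) (D * of_int (U 1 0 (Suc m))) (D * of_int (U 1 0 (Suc (Suc m)))) \<Longrightarrow> ?thesis" using GBex[of 0 "-1"] by (simp add: C8_def)
  have G5: "GB (1) (- 1) (D * of_int (U 1 0 m)) (D * of_int (U 1 0 (Suc m))) (D * of_int (U 1 0 (Suc (Suc m)))) \<Longrightarrow> ?thesis" using GBex[of 1 "-1"] by (simp add: C8_def)
  have G6: "GB (1) (0) (D * of_int (U 1 0 m)) (D * of_int (U 1 0 (Suc m))) (D * of_int (U 1 0 (Suc (Suc m)))) \<Longrightarrow> ?thesis" using GBex[of 1 0] by (simp add: C8_def)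
  have G7: "GB (1) (1) (D * of_int (U 1 0 m)) (D * of_int (U 1 0 (Suc m))) (D * of_int (U 1 0 (Suc (Suc m)))) \<Longrightarrow> ?thesis" using GBex[of 1 1] by (simp add: C8_def)
  show ?thesis using cov' G0 G1 G2 G3 G4 G5 G6 G7 by blast
qed

lemma seqA:
  fixes \<phi> :: real
  assumes c: "\<phi>^3 = \<phi>^2 + \<phi> + 1" and n: "4 \<le> n"
  shows "\<exists>p q. (p,q) \<in> C8 \<and> SA p q (n-3)"
proof -
  consider "n = 4" | "n = 5" | "n = 6" | "n = 7" | "8 \<le> n" using n by linarith
  then show ?thesis
  proof cases
    case 1
    have "SA 0 (-1) 1" by (simp add: SA_def eval_nat_numeral)
    thus ?thesis using 1 unfolding C8_def by auto
  next
    case 2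
    have "SA (-1) 1 2" by (simp add: SA_def eval_nat_numeral)
    thus ?thesis using 2 unfolding C8_def by auto
  next
    case 3
    have "SA 1 0 3" by (simp add: SA_def eval_nat_numeral)
    thus ?thesis using 3 unfolding C8_def by auto
  next
    case 4
    have "SA (-1) (-1) 4" by (simp add: SA_def eval_nat_numeral)
    thus ?thesis using 4 unfolding C8_def by auto
  next
    case 5
    thus ?thesis using largeA[OF c, of "n-3"] by simp
  qed
qed

lemma seqB:
  fixes \<phi> :: real
  assumes c: "\<phi>^3 = \<phi>^2 + \<phi> + 1" and n: "4 \<le> n"
  shows "\<exists>p q. (p,q) \<in> C8 \<and> SB p q (n-3)"
proof -
  consider "n = 4" | "n = 5" | "n = 6" | "n = 7" | "8 \<le> n" using n by linarith
  then show ?thesis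
  proof cases
    case 1
    have "SB 1 (-1) 1" by (simp add: SB_def eval_nat_numeral)
    thus ?thesis using 1 unfolding C8_def by auto
  next
    case 2
    have "SB (-1) 0 2" by (simp add: SB_def eval_nat_numeral)
    thus ?thesis using 2 unfolding C8_def by auto
  next
    case 3
    have "SB 0 1 3" by (simp add: SB_def eval_nat_numeral)
    thus ?thesis using 3 unfolding C8_def by auto
  next
    case 4
    have "SB 1 (-1) 4" by (simp add: SB_def eval_nat_numeral)
    thus ?thesis using 4 unfolding C8_def by auto
  next
    case 5
    thus ?thesis using largeB[OF c, of "n-3"] by simp
  qed
qed

lemma U_rec_seq:
  assumes "4 \<le> i" "i \<le> n"
  shows "U p q (n - i) = U p q (n - (i - 1)) + U p q (n - (i - 2)) + U p q (n - (i - 3))"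
proof -
  have e1: "n - (i - 1) = Suc (n - i)" and e2: "n - (i - 2) = Suc (Suc (n - i))"
    and e3: "n - (i - 3) = Suc (Suc (Suc (n - i)))" using assms by auto
  show ?thesis unfolding e1 e2 e3 by simp
qed

lemma inv_at:
  fixes \<phi> :: real
  assumes c: "\<phi>^3 = \<phi>^2 + \<phi> + 1"
  shows "Qf \<phi> (\<phi>*of_int (U p q (Suc m)) - of_int (U p q m)) (\<phi>*of_int (U p q (Suc (Suc m))) - of_int (U p q (Suc m)))
     = \<phi>^m * Qf \<phi> (\<phi>*of_int q) (\<phi>*of_int p - of_int q)"
  using Qf_pow[OF c, of p q m] unfolding ee_def by simp

theorem lemma5:
  fixes \<phi> :: real
  assumes phi: "\<phi> ^ 3 = \<phi> ^ 2 + \<phi> + 1"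
  shows "(\<forall>n::nat. n \<ge> 4 \<longrightarrow>
           (\<exists>a :: nat \<Rightarrow> int.
              (\<forall>i. 4 \<le> i \<and> i \<le> n \<longrightarrow> a i = a (i - 1) + a (i - 2) + a (i - 3)) \<and>
              a n = 0 \<and> a 1 > 0 \<and> a 2 \<le> 0 \<and> a 3 < 0 \<and>
              real_of_int (a 1) < 0.81 * \<phi> powr (real n / 2)))
       \<and> (\<forall>n::nat. n \<ge> 4 \<longrightarrow>
           (\<exists>b :: nat \<Rightarrow> int.
              (\<forall>i. 4 \<le> i \<and> i \<le> n \<longrightarrow> b i = b (i - 1) + b (i - 2) + b (i - 3)) \<and>
              b n = 0 \<and> b 2 > 0 \<and> b 1 \<le> 0 \<and> b 3 < 0 \<and>
              real_of_int (b 2) < 0.64 * \<phi> powr (real n / 2)))"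
proof -
  have b: "18392867/10000000 \<le> \<phi> \<and> \<phi> \<le> 4598217/2500000" using phi_bounds[OF phi] by simp
  have lo: "18392867/10000000 \<le> \<phi>" and hi: "\<phi> \<le> 18392868/10000000" using b by simp_all
  show ?thesis
  proof (intro conjI allI impI)
    fix n :: nat assume n: "4 \<le> n"
    obtain p q where pq: "(p,q) \<in> C8" and S: "SA p q (n-3)" using seqA[OF phi n] by blast
    define m where "m = n - 3"
    have e1: "n - 1 = Suc (Suc m)" and e2: "n - 2 = Suc m" and e3: "n - 3 = m" and en: "n = m + 3"
      using n unfolding m_def by auto
    let ?a = "\<lambda>i. U p q (n - i)"
    have s: "0 < U p q (Suc (Suc m))" "U p q (Suc m) \<le> 0" "U p q m < 0" using S unfolding SA_def e3 by auto
    have ub: "of_int (U p q (Suc (Suc m))) < 0.81 * \<phi> powr (real (m+3) / 2)"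
      by (rule ubA[OF phi conjunct1[OF b] conjunct2[OF b] _ _ inv_at[OF phi] Q0_bound[OF phi pq]]) (use s in simp_all)
    show "\<exists>a :: nat \<Rightarrow> int.
              (\<forall>i. 4 \<le> i \<and> i \<le> n \<longrightarrow> a i = a (i - 1) + a (i - 2) + a (i - 3)) \<and>
              a n = 0 \<and> a 1 > 0 \<and> a 2 \<le> 0 \<and> a 3 < 0 \<and>
              real_of_int (a 1) < 0.81 * \<phi> powr (real n / 2)"
    proof (intro exI[of _ ?a] conjI allI impI)
      fix i assume "4 \<le> i \<and> i \<le> n"
      thus "?a i = ?a (i - 1) + ?a (i - 2) + ?a (i - 3)" using U_rec_seq by blast
    qed (use s ub en in \<open>simp_all add: e1 e2 e3\<close>)
  next
    fix n :: nat assume n: "4 \<le> n"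
    obtain p q where pq: "(p,q) \<in> C8" and S: "SB p q (n-3)" using seqB[OF phi n] by blast
    define m where "m = n - 3"
    have e1: "n - 1 = Suc (Suc m)" and e2: "n - 2 = Suc m" and e3: "n - 3 = m" and en: "n = m + 3"
      using n unfolding m_def by auto
    let ?a = "\<lambda>i. U p q (n - i)"
    have s: "0 < U p q (Suc m)" "U p q (Suc (Suc m)) \<le> 0" "U p q m < 0" using S unfolding SB_def e3 by auto
    have ub: "of_int (U p q (Suc m)) < 0.64 * \<phi> powr (real (m+3) / 2)"
      by (rule ubB[OF phi conjunct1[OF b] conjunct2[OF b] _ _ inv_at[OF phi] Q0_bound[OF phi pq]]) (use s in simp_all)
    show "\<exists>b :: nat \<Rightarrow> int.
              (\<forall>i. 4 \<le> i \<and> i \<le> n \<longrightarrow> b i = b (i - 1) + b (i - 2) + b (i - 3)) \<and>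
              b n = 0 \<and> b 2 > 0 \<and> b 1 \<le> 0 \<and> b 3 < 0 \<and>
              real_of_int (b 2) < 0.64 * \<phi> powr (real n / 2)"
    proof (intro exI[of _ ?a] conjI allI impI)
      fix i assume "4 \<le> i \<and> i \<le> n"
      thus "?a i = ?a (i - 1) + ?a (i - 2) + ?a (i - 3)" using U_rec_seq by blast
    qed (use s ub en in \<open>simp_all add: e1 e2 e3\<close>)
  qed
qed

end
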